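(* Let $F$ be a dyadic non-archimedean local field of characteristic $0$ and let $B=(b_{ij})\in\mathcal H_n(\mathfrak o)$ be a nondegenerate reduced form of GK-type $(\underline a,\sigma)$. (1) If $n=\deg B$ is odd and $i_0\in\mathcal P^0(\sigma)$, then $\mathrm{ord}(b_{i_0i_0})\equiv\mathrm{ord}(\det B)\pmod 2$. (2) If $n$ is even and $\xi_B=0$, then for every integer $k$ there is $i_0\in\mathcal P^0(\sigma)$ with $\mathrm{ord}(b_{i_0i_0})\equiv k\pmod2$.
   Context: $F$ is a non-archimedean local field of characteristic $0$ with ring of integers $\mathfrak o$, prime element $\varpi$, residue field of even cardinality (dyadic); $\mathrm{ord}$ is the normalized valuation ($\mathrm{ord}(\varpi)=1$, $\mathrm{ord}(0)=+\infty$). $\mathcal H_n(\mathfrak o)$ is the set of symmetric $B=(b_{ij})\in M_n(F)$ with $b_{ii}\in\mathfrak o$ and $2b_{ij}\in\mathfrak o$. For nondegenerate $B$: $D_B=(-4)^{[n/2]}\det B$, and $\xi_B=1,-1,0$ according as $D_B\in F^{\times2}$, $F(\sqrt{D_B})/F$ is an unramified quadratic extension, or is ramified. Admissible involutions: let $\underline a=(a_1,\dots,a_n)$ be a non-decreasing sequence of non-negative integers, written as $m_1$ repeated $n_1$ times, ..., $m_r$ repeated $n_r$ times with $m_1<\dots<m_r$; $n_j^*=n_1+\dots+n_j$, $I_s=\{n_{s-1}^*+1,\dots,n_s^*\}$. For an involution $\sigma\in\mathfrak S_n$ put $\mathcal P^0=\{i:\sigma(i)=i\}$, $\mathcal P^+=\{i:a_i>a_{\sigma(i)}\}$,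 $\mathcal P^-=\{i:a_i<a_{\sigma(i)}\}$. $\sigma$ is $\underline a$-admissible if: (i) $\mathcal P^0$ has at most two elements, and if it has two distinct elements $i,j$ then $a_i\not\equiv a_j \pmod 2$; moreover if $i\in I_s\cap\mathcal P^0$ then $i=\max I_s$ and $i=\max\{j\in\mathcal P^0\cup\mathcal P^+: a_j\equiv a_i\pmod2\}$; (ii) for each $s$, $I_s\cap\mathcal P^-$ has at most one element, and if $i\in I_s\cap\mathcal P^-$ then $i=\max I_s$ and $\sigma(i)=\min\{j\in\mathcal P^+: j>i,\ a_j\equiv a_i\pmod 2\}$; (iii) for each $s$, $I_s\cap\mathcal P^+$ has at most one element, and if $i\in I_s\cap\mathcal P^+$ then $i=\min I_s$ and $\sigma(i)=\max\{j\in\mathcal P^-: j<i,\ a_j\equiv a_i\pmod 2\}$; (iv) if $a_i=a_{\sigma(i)}$ then $|i-\sigma(i)|\le1$. Reduced forms: $B=(b_{ij})\in\mathcal H_n(\mathfrak o)$ with $\mathrm{ord}(b_{ii})\ge a_i$ and $\mathrm{ord}(2b_{ij})\ge(a_i+a_j)/2$ for $i<j$ is a reduced form of GK-type $(\underline a,\sigma)$, $\sigma$ an $\underline a$-admissible involution, if: (1) for $i\notin\mathcal P^0$, $\mathrm{ord}(2b_{i\sigma(i)})=(a_i+a_{\sigma(i)})/2$, and for $i\in\mathcal P^-$, $\mathrm{ord}(b_{ii})=a_i$; (2) for $i\in\mathcal P^0$, $\mathrm{ord}(b_{ii})=a_i$; (3) for $j\neq i,\sigma(i)$, $\mathrm{ord}(2b_{ij})>(a_i+a_j)/2$.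 *)

theory Defs
  imports Main "Jordan_Normal_Form.Determinant" "HOL-Library.Disjoint_Sets"
begin

text \<open>The normalized valuation is a function ordF :: 'a => int; its value at 0
  is irrelevant (ord 0 = +infinity is handled by explicit "x = 0 \<or> ..." clauses).\<close>

definition normalized_discrete_valuation :: "('a::field \<Rightarrow> int) \<Rightarrow> bool" where
  "normalized_discrete_valuation ordF \<longleftrightarrow>
     (\<forall>x y. x \<noteq> 0 \<longrightarrow> y \<noteq> 0 \<longrightarrow> ordF (x * y) = ordF x + ordF y) \<and>
     (\<forall>x y. x \<noteq> 0 \<longrightarrow> y \<noteq> 0 \<longrightarrow> x + y \<noteq> 0 \<longrightarrow> ordF (x + y) \<ge> min (ordF x) (ordF y)) \<and>
     (\<exists>p. p \<noteq> 0 \<and> ordF p = 1)"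

definition ord_ge :: "('a::field \<Rightarrow> int) \<Rightarrow> 'a \<Rightarrow> int \<Rightarrow> bool" where
  "ord_ge ordF x k \<longleftrightarrow> x = 0 \<or> ordF x \<ge> k"

definition valuation_complete :: "('a::field \<Rightarrow> int) \<Rightarrow> bool" where
  "valuation_complete ordF \<longleftrightarrow>
     (\<forall>s :: nat \<Rightarrow> 'a.
        (\<forall>N. \<exists>M. \<forall>m\<ge>M. \<forall>n\<ge>M. ord_ge ordF (s m - s n) N) \<longrightarrow>
        (\<exists>L. \<forall>N. \<exists>M. \<forall>n\<ge>M. ord_ge ordF (s n - L) N))"

definition int_ring :: "('a::field \<Rightarrow> int) \<Rightarrow> 'a set" where
  "int_ring ordF = {x. ord_ge ordF x 0}"

definition residue_field :: "('a::field \<Rightarrow> int) \<Rightarrow> 'a set set" where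
  "residue_field ordF = int_ring ordF // {(x, y). x \<in> int_ring ordF \<and> y \<in> int_ring ordF \<and> ord_ge ordF (x - y) 1}"

definition dyadic_local_field :: "('a::field_char_0 \<Rightarrow> int) \<Rightarrow> bool" where
  "dyadic_local_field ordF \<longleftrightarrow>
     normalized_discrete_valuation ordF \<and> valuation_complete ordF \<and>
     finite (residue_field ordF) \<and> even (card (residue_field ordF))"

definition H_int :: "('a::field \<Rightarrow> int) \<Rightarrow> nat \<Rightarrow> 'a mat \<Rightarrow> bool" where
  "H_int ordF n B \<longleftrightarrow> B \<in> carrier_mat n n \<and> B\<^sup>T = B \<and>
     (\<forall>i<n. ord_ge ordF (B $$ (i, i)) 0) \<and>
     (\<forall>i<n. \<forall>j<n. ord_ge ordF (2 * B $$ (i, j)) 0)"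

definition D_of :: "nat \<Rightarrow> 'a::field mat \<Rightarrow> 'a" where
  "D_of n B = (- 4) ^ (n div 2) * det B"

definition is_square :: "'a::field \<Rightarrow> bool" where
  "is_square x \<longleftrightarrow> (\<exists>y. x = y * y)"

text \<open>xi_B = 0: F(sqrt D)/F is a ramified quadratic extension, i.e. D is not a square
  and the ramification index of F(sqrt D)/F is 2.  The (unique) extension of ord to
  L = F(sqrt D) is w(a + b sqrt D) = ord(a^2 - D b^2)/2, so e = 2 iff some nonzero
  norm a^2 - D b^2 has odd valuation.\<close>
definition ramified_quadratic :: "('a::field \<Rightarrow> int) \<Rightarrow> 'a \<Rightarrow> bool" where
  "ramified_quadratic ordF D \<longleftrightarrow> \<not> is_square D \<and>
     (\<exists>x y. x * x - D * (y * y) \<noteq> 0 \<and> odd (ordF (x * x - D * (y * y))))"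

definition xi_zero :: "('a::field \<Rightarrow> int) \<Rightarrow> nat \<Rightarrow> 'a mat \<Rightarrow> bool" where
  "xi_zero ordF n B \<longleftrightarrow> ramified_quadratic ordF (D_of n B)"

section \<open>Admissible involutions (indices 0..n-1)\<close>

definition block :: "nat \<Rightarrow> (nat \<Rightarrow> nat) \<Rightarrow> nat \<Rightarrow> nat set" where
  "block n a i = {j. j < n \<and> a j = a i}"

definition P0 :: "nat \<Rightarrow> (nat \<Rightarrow> nat) \<Rightarrow> nat set" where
  "P0 n \<sigma> = {i. i < n \<and> \<sigma> i = i}"

definition Pplus :: "nat \<Rightarrow> (nat \<Rightarrow> nat) \<Rightarrow> (nat \<Rightarrow> nat) \<Rightarrow> nat set" where
  "Pplus n a \<sigma> = {i. i < n \<and> a i > a (\<sigma> i)}"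

definition Pminus :: "nat \<Rightarrow> (nat \<Rightarrow> nat) \<Rightarrow> (nat \<Rightarrow> nat) \<Rightarrow> nat set" where
  "Pminus n a \<sigma> = {i. i < n \<and> a i < a (\<sigma> i)}"

definition same_par :: "nat \<Rightarrow> nat \<Rightarrow> bool" where
  "same_par x y \<longleftrightarrow> x mod 2 = y mod 2"

definition admissible :: "nat \<Rightarrow> (nat \<Rightarrow> nat) \<Rightarrow> (nat \<Rightarrow> nat) \<Rightarrow> bool" where
  "admissible n a \<sigma> \<longleftrightarrow>
     \<sigma> permutes {..<n} \<and> (\<forall>i. \<sigma> (\<sigma> i) = i) \<and>
     \<comment> \<open>(i)\<close>
     card (P0 n \<sigma>) \<le> 2 \<and>
     (\<forall>i\<in>P0 n \<sigma>. \<forall>j\<in>P0 n \<sigma>. i \<noteq> j \<longrightarrow> \<not> same_par (a i) (a j)) \<and>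
     (\<forall>i\<in>P0 n \<sigma>. i = Max (block n a i) \<and>
        i = Max {j \<in> P0 n \<sigma> \<union> Pplus n a \<sigma>. same_par (a j) (a i)}) \<and>
     \<comment> \<open>(ii)\<close>
     (\<forall>i<n. card (block n a i \<inter> Pminus n a \<sigma>) \<le> 1) \<and>
     (\<forall>i\<in>Pminus n a \<sigma>. i = Max (block n a i) \<and>
        (let S = {j \<in> Pplus n a \<sigma>. j > i \<and> same_par (a j) (a i)} in
           \<sigma> i \<in> S \<and> (\<forall>j\<in>S. \<sigma> i \<le> j))) \<and>
     \<comment> \<open>(iii)\<close>
     (\<forall>i<n. card (block n a i \<inter> Pplus n a \<sigma>) \<le> 1) \<and>
     (\<forall>i\<in>Pplus n a \<sigma>. i = Min (block n a i) \<and>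
        (let S = {j \<in> Pminus n a \<sigma>. j < i \<and> same_par (a j) (a i)} in
           \<sigma> i \<in> S \<and> (\<forall>j\<in>S. j \<le> \<sigma> i))) \<and>
     \<comment> \<open>(iv)\<close>
     (\<forall>i<n. a i = a (\<sigma> i) \<longrightarrow> (i \<le> \<sigma> i + 1 \<and> \<sigma> i \<le> i + 1))"

definition reduced_form :: "('a::field \<Rightarrow> int) \<Rightarrow> nat \<Rightarrow> (nat \<Rightarrow> nat) \<Rightarrow> (nat \<Rightarrow> nat) \<Rightarrow> 'a mat \<Rightarrow> bool" where
  "reduced_form ordF n a \<sigma> B \<longleftrightarrow>
     H_int ordF n B \<and>
     (\<forall>i j. i < j \<longrightarrow> j < n \<longrightarrow> a i \<le> a j) \<and>
     admissible n a \<sigma> \<and>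
     (\<forall>i<n. ord_ge ordF (B $$ (i, i)) (int (a i))) \<and>
     (\<forall>i<n. \<forall>j<n. i < j \<longrightarrow>
        (2 * B $$ (i, j) = 0 \<or> 2 * ordF (2 * B $$ (i, j)) \<ge> int (a i) + int (a j))) \<and>
     \<comment> \<open>(1)\<close>
     (\<forall>i<n. i \<notin> P0 n \<sigma> \<longrightarrow> 2 * B $$ (i, \<sigma> i) \<noteq> 0 \<and>
        2 * ordF (2 * B $$ (i, \<sigma> i)) = int (a i) + int (a (\<sigma> i))) \<and>
     (\<forall>i\<in>Pminus n a \<sigma>. B $$ (i, i) \<noteq> 0 \<and> ordF (B $$ (i, i)) = int (a i)) \<and>
     \<comment> \<open>(2)\<close>
     (\<forall>i\<in>P0 n \<sigma>. B $$ (i, i) \<noteq> 0 \<and> ordF (B $$ (i, i)) = int (a i)) \<and>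
     \<comment> \<open>(3)\<close>
     (\<forall>i<n. \<forall>j<n. j \<noteq> i \<longrightarrow> j \<noteq> \<sigma> i \<longrightarrow>
        (2 * B $$ (i, j) = 0 \<or> 2 * ordF (2 * B $$ (i, j)) > int (a i) + int (a j)))"

end

theory Submission
  imports Defs
begin


locale dval =
  fixes v :: "'a::field_char_0 \<Rightarrow> int"
  assumes nv: "normalized_discrete_valuation v"
begin

lemma vmult: "x \<noteq> 0 \<Longrightarrow> y \<noteq> 0 \<Longrightarrow> v (x*y) = v x + v y"
  using nv unfolding normalized_discrete_valuation_def by blast
lemma vadd: "x \<noteq> 0 \<Longrightarrow> y \<noteq> 0 \<Longrightarrow> x + y \<noteq> 0 \<Longrightarrow> min (v x) (v y) \<le> v (x+y)"
  using nv unfolding normalized_discrete_valuation_def by blast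
lemma v1[simp]: "v 1 = 0"
  using vmult[of 1 1] by simp
lemma vm1[simp]: "v (-1) = 0"
  using vmult[of "-1" "-1"] by simp
lemma vneg[simp]: "v (- x) = v x" if "x \<noteq> 0"
  using vmult[of "-1" x] that by simp
lemma vinv: "x \<noteq> 0 \<Longrightarrow> v (inverse x) = - v x"
  using vmult[of x "inverse x"] by simp
lemma vdiv: "x \<noteq> 0 \<Longrightarrow> y \<noteq> 0 \<Longrightarrow> v (x / y) = v x - v y"
  by (simp add: divide_inverse vmult vinv)
lemma vpow: "x \<noteq> 0 \<Longrightarrow> v (x^n) = int n * v x"
  by (induction n, auto simp: vmult algebra_simps)

lemma ord_ge_add: "ord_ge v x k \<Longrightarrow> ord_ge v y k \<Longrightarrow> ord_ge v (x+y) k"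
  unfolding ord_ge_def using vadd[of x y] by (cases "x=0"; cases "y=0"; cases "x+y=0"; auto)
lemma ord_ge_neg: "ord_ge v x k \<Longrightarrow> ord_ge v (-x) k"
  unfolding ord_ge_def by (cases "x = 0", auto)
lemma ord_ge_diff: "ord_ge v x k \<Longrightarrow> ord_ge v y k \<Longrightarrow> ord_ge v (x-y) k"
  using ord_ge_add[of x k "-y"] ord_ge_neg[of y k] by simp
lemma ord_ge_mult: "ord_ge v x k \<Longrightarrow> ord_ge v y l \<Longrightarrow> ord_ge v (x*y) (k+l)"
  unfolding ord_ge_def by (cases "x = 0"; cases "y = 0", auto simp: vmult)
lemma ord_ge_mono: "ord_ge v x k \<Longrightarrow> l \<le> k \<Longrightarrow> ord_ge v x l"
  unfolding ord_ge_def by auto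
lemma ord_ge_zero[simp]: "ord_ge v 0 k" unfolding ord_ge_def by simp

lemma strict_sum: assumes "x \<noteq> 0" "ord_ge v y (v x + 1)"
  shows "x + y \<noteq> 0 \<and> v (x + y) = v x"
proof (cases "y = 0")
  case True thus ?thesis using assms by simp
next
  case False
  hence vy: "v y > v x" using assms unfolding ord_ge_def by auto
  have ne: "x + y \<noteq> 0"
  proof
    assume "x + y = 0" hence "y = - x" by (metis neg_eq_iff_add_eq_0)
    thus False using vy assms(1) by simp
  qed
  have a: "min (v x) (v y) \<le> v (x+y)" using vadd[OF assms(1) False ne] .
  have b: "min (v (x+y)) (v (-y)) \<le> v x"
    using vadd[of "x+y" "-y"] ne False assms(1) by simp
  show ?thesis using a b vy ne False by auto
qed

definition vge :: "'a \<Rightarrow> int \<Rightarrow> bool" where "vge x r \<longleftrightarrow> x = 0 \<or> r \<le> 2 * v x"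
definition vgt :: "'a \<Rightarrow> int \<Rightarrow> bool" where "vgt x r \<longleftrightarrow> x = 0 \<or> r < 2 * v x"

lemma vge_zero[simp]: "vge 0 r" and vgt_zero[simp]: "vgt 0 r" by (auto simp: vge_def vgt_def)
lemma vgt_vge: "vgt x r \<Longrightarrow> vge x r" by (auto simp: vge_def vgt_def)
lemma vgt_mono: "vgt x r \<Longrightarrow> s \<le> r \<Longrightarrow> vgt x s" by (auto simp: vgt_def)
lemma vge_mono: "vge x r \<Longrightarrow> s \<le> r \<Longrightarrow> vge x s" by (auto simp: vge_def)
lemma vgt_mult: "vgt x r \<Longrightarrow> vge y s \<Longrightarrow> vgt (x*y) (r+s)"
  by (cases "x = 0"; cases "y = 0", auto simp: vge_def vgt_def vmult)
lemma vge_mult: "vge x r \<Longrightarrow> vge y s \<Longrightarrow> vge (x*y) (r+s)"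
  by (cases "x = 0"; cases "y = 0", auto simp: vge_def vgt_def vmult)
lemma vge_add: "vge x r \<Longrightarrow> vge y r \<Longrightarrow> vge (x+y) r"
  unfolding vge_def using vadd[of x y] by (cases "x=0"; cases "y=0"; cases "x+y=0"; auto)
lemma vgt_add: "vgt x r \<Longrightarrow> vgt y r \<Longrightarrow> vgt (x+y) r"
  unfolding vgt_def using vadd[of x y] by (cases "x=0"; cases "y=0"; cases "x+y=0"; auto)
lemma vgt_neg: "vgt x r \<Longrightarrow> vgt (-x) r" by (cases "x = 0", auto simp: vgt_def)
lemma vge_neg: "vge x r \<Longrightarrow> vge (-x) r" by (cases "x = 0", auto simp: vge_def)
lemma vgt_diff: "vgt x r \<Longrightarrow> vgt y r \<Longrightarrow> vgt (x-y) r"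
  using vgt_add[of x r "-y"] vgt_neg[of y r] by simp
lemma vge_diff: "vge x r \<Longrightarrow> vge y r \<Longrightarrow> vge (x-y) r"
  using vge_add[of x r "-y"] vge_neg[of y r] by simp
lemma vgt_div: "y \<noteq> 0 \<Longrightarrow> vgt x r \<Longrightarrow> vgt (x/y) (r - 2 * v y)"
  by (cases "x = 0", auto simp: vgt_def vdiv)
lemma vge_div: "y \<noteq> 0 \<Longrightarrow> vge x r \<Longrightarrow> vge (x/y) (r - 2 * v y)"
  by (cases "x = 0", auto simp: vge_def vdiv)
lemma vge_exact: "x \<noteq> 0 \<Longrightarrow> vge x (2 * v x)" by (simp add: vge_def)
lemma vgt_exact_sum: assumes "x \<noteq> 0" "vgt y (2 * v x)"
  shows "x + y \<noteq> 0 \<and> v (x + y) = v x"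
  using strict_sum[OF assms(1), of y] assms(2) unfolding vgt_def ord_ge_def by auto

end

locale dyad = dval +
  assumes two: "v 2 \<ge> 1"
begin

lemma two_nz[simp]: "(2::'a) \<noteq> 0" by simp
lemma vge_two: "vge 2 0" using two by (simp add: vge_def)
lemma v4: "v 4 = 2 * v 2" using vmult[of 2 2] by simp

lemma unit14: assumes "ord_ge v t 0" shows "1 + 4*t \<noteq> 0 \<and> v (1 + 4*t) = 0"
proof -
  have "ord_ge v 4 2" using v4 two by (simp add: ord_ge_def)
  hence "ord_ge v (4*t) (0 + 1)" using ord_ge_mult[OF _ assms, of 4 2] ord_ge_mono by fastforce
  thus ?thesis using strict_sum[of 1 "4*t"] by simp
qed

lemma vge0_ord: "vge x 0 \<longleftrightarrow> ord_ge v x 0" by (auto simp: vge_def ord_ge_def)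

lemma delta_form:
  assumes q: "2*q \<noteq> 0" "2*v(2*q) = kk+ll"
  and p: "vge p (2*kk)" and s: "vge s (2*ll)"
  shows "\<exists>u t. ord_ge v t 0 \<and> u = 1 + 4*t \<and> u \<noteq> 0 \<and> v u = 0 \<and> p*s - q*q = - ((2*q)*(2*q)/4) * u"
proof -
  define Q where "Q = 2*q"
  have Q0: "Q*Q \<noteq> 0" using q Q_def by simp
  have vQQ: "2 * v (Q*Q) = 2*kk+2*ll" using q vmult[of Q Q] Q_def by simp
  define t where "t = - (p*s) / (Q*Q)"
  have "vge (p*s) (2*kk+2*ll)" using vge_mult[OF p s] by simp
  hence "vge (- (p*s)) (2*kk+2*ll)" by (rule vge_neg)
  hence "vge t 0" unfolding t_def using vge_div[of "Q*Q" "- (p*s)" "2*kk+2*ll"] Q0 vQQ by simp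
  hence t0: "ord_ge v t 0" using vge0_ord by simp
  have "p*s - q*q = - ((2*q)*(2*q)/4) * (1 + 4*t)"
    using Q0 unfolding t_def Q_def by (simp add: field_simps)
  thus ?thesis using t0 unit14[OF t0] by blast
qed

lemma corr_off:
  assumes q: "2*q \<noteq> 0" "2*v(2*q) = kk+ll"
  and p: "vge p (2*kk)" and s: "vge s (2*ll)"
  and A: "vgt (2*A) (\<alpha>+kk)" and A': "vgt (2*A') (\<beta>+kk)"
  and Bx: "vgt (2*Bx) (\<alpha>+ll)" and By: "vgt (2*By) (\<beta>+ll)"
  shows "vgt (2*((A*(s*A' - q*By) + Bx*(p*By - q*A'))/(p*s - q*q))) (\<alpha>+\<beta>)"
proof -
  obtain u t where ut: "ord_ge v t 0" "u = 1 + 4*t" "u \<noteq> 0" "v u = 0"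
    and d: "p*s - q*q = - ((2*q)*(2*q)/4) * u" using delta_form[OF q p s] by blast
  define Q where "Q = 2*q"
  have Q0: "Q \<noteq> 0" using q Q_def by simp
  have vQ: "vge Q (kk+ll)" using q Q_def by (simp add: vge_def)
  define R where "R = \<alpha>+\<beta>+2*kk+2*ll"
  have T1: "vgt ((((2*A)*(2*A'))*s)*2) R"
    using vgt_mult[OF vgt_mult[OF vgt_mult[OF A vgt_vge[OF A']] s] vge_two] unfolding R_def
    by (auto elim: vgt_mono)
  have T2: "vgt ((2*A)*(2*By)*Q) R"
    using vgt_mult[OF vgt_mult[OF A vgt_vge[OF By]] vQ] unfolding R_def by (auto elim: vgt_mono)
  have T3: "vgt ((2*A')*(2*Bx)*Q) R"
    using vgt_mult[OF vgt_mult[OF A' vgt_vge[OF Bx]] vQ] unfolding R_def by (auto elim: vgt_mono)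
  have T4: "vgt ((((2*Bx)*(2*By))*p)*2) R"
    using vgt_mult[OF vgt_mult[OF vgt_mult[OF Bx vgt_vge[OF By]] p] vge_two] unfolding R_def
    by (auto elim: vgt_mono)
  define N8 where "N8 = ((((2*A)*(2*A'))*s)*2) - ((2*A)*(2*By)*Q) - ((2*A')*(2*Bx)*Q) + ((((2*Bx)*(2*By))*p)*2)"
  have vN: "vgt N8 R" unfolding N8_def by (intro vgt_add vgt_diff T1 T2 T3 T4)
  have QQu: "Q*Q*u \<noteq> 0" using Q0 ut by simp
  have vQQu: "2 * v (Q*Q*u) = 2*kk + 2*ll" using vmult[of "Q*Q" u] vmult[of Q Q] Q0 ut q Q_def by simp
  have eq: "2*((A*(s*A' - q*By) + Bx*(p*By - q*A'))/(p*s - q*q)) = - (N8 / (Q*Q*u))"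
    unfolding d N8_def Q_def using QQu Q_def by (simp add: field_simps)
  show ?thesis unfolding eq
    using vgt_neg[OF vgt_div[OF QQu vN]] vQQu unfolding R_def by simp
qed

lemma corr_diag:
  assumes q: "2*q \<noteq> 0" "2*v(2*q) = kk+ll"
  and p: "vge p (2*kk)" and s: "vge s (2*ll)"
  and A: "vgt (2*A) (\<alpha>+kk)" and Bx: "vgt (2*Bx) (\<alpha>+ll)"
  shows "vgt ((A*(s*A - q*Bx) + Bx*(p*Bx - q*A))/(p*s - q*q)) (2*\<alpha>)"
proof -
  obtain u t where ut: "ord_ge v t 0" "u = 1 + 4*t" "u \<noteq> 0" "v u = 0"
    and d: "p*s - q*q = - ((2*q)*(2*q)/4) * u" using delta_form[OF q p s] by blast
  define Q where "Q = 2*q"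
  have Q0: "Q \<noteq> 0" using q Q_def by simp
  have vQ: "vge Q (kk+ll)" using q Q_def by (simp add: vge_def)
  define R where "R = 2*\<alpha>+2*kk+2*ll"
  have T1: "vgt (((2*A)*(2*A))*s) R"
    using vgt_mult[OF vgt_mult[OF A vgt_vge[OF A]] s] unfolding R_def
    by (auto elim: vgt_mono)
  have T2: "vgt ((2*A)*(2*Bx)*Q) R"
    using vgt_mult[OF vgt_mult[OF A vgt_vge[OF Bx]] vQ] unfolding R_def by (auto elim: vgt_mono)
  have T4: "vgt (((2*Bx)*(2*Bx))*p) R"
    using vgt_mult[OF vgt_mult[OF Bx vgt_vge[OF Bx]] p] unfolding R_def
    by (auto elim: vgt_mono)
  define N4 where "N4 = (((2*A)*(2*A))*s) - ((2*A)*(2*Bx)*Q) + (((2*Bx)*(2*Bx))*p)"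
  have vN: "vgt N4 R" unfolding N4_def by (intro vgt_add vgt_diff T1 T2 T4)
  have QQu: "Q*Q*u \<noteq> 0" using Q0 ut by simp
  have vQQu: "2 * v (Q*Q*u) = 2*kk + 2*ll" using vmult[of "Q*Q" u] vmult[of Q Q] Q0 ut q Q_def by simp
  have eq: "(A*(s*A - q*Bx) + Bx*(p*Bx - q*A))/(p*s - q*q) = - (N4 / (Q*Q*u))"
    unfolding d N4_def Q_def using QQu Q_def by (simp add: field_simps)
  show ?thesis unfolding eq
    using vgt_neg[OF vgt_div[OF QQu vN]] vQQu unfolding R_def by simp
qed

end

lemma det1: "det (mat (Suc 0) (Suc 0) g) = (g(0,0)::'a::comm_ring_1)"
proof -
  have "det (mat 1 1 g) = (\<Sum>j<1. mat 1 1 g $$ (0, j) * cofactor (mat 1 1 g) 0 j)"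
    by (rule laplace_expansion_row[of _ 1], auto)
  also have "... = g(0,0)"
    by (simp add: cofactor_def mat_delete_def)
  finally show ?thesis by simp
qed
lemma det2: "det (mat 2 2 f) = f(0,0)*f(1,1) - f(0,1)*(f(1,0)::'a::comm_ring_1)"
proof -
  have "det (mat 2 2 f) = (\<Sum>j<2. mat 2 2 f $$ (0, j) * cofactor (mat 2 2 f) 0 j)"
    by (rule laplace_expansion_row[of _ 2], auto)
  also have "... = f(0,0)*f(1,1) - f(0,1)*(f(1,0))"
    by (simp add: numeral_2_eq_2 cofactor_def mat_delete_def det1)
  finally show ?thesis .
qed

lemma schur2:
  fixes C :: "'a::field mat"
  assumes C: "C \<in> carrier_mat (k+2) (k+2)"
  and dH: "C$$(k,k)*C$$(k+1,k+1) - C$$(k,k+1)*C$$(k+1,k) \<noteq> 0"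
  shows "det C = (C$$(k,k)*C$$(k+1,k+1) - C$$(k,k+1)*C$$(k+1,k)) *
    det (mat k k (\<lambda>(x,y). C$$(x,y) - (C$$(x,k)*(C$$(k+1,k+1)*C$$(k,y) - C$$(k,k+1)*C$$(k+1,y))
       + C$$(x,k+1)*(C$$(k,k)*C$$(k+1,y) - C$$(k+1,k)*C$$(k,y))) / (C$$(k,k)*C$$(k+1,k+1) - C$$(k,k+1)*C$$(k+1,k))))"
proof -
  define \<delta> where "\<delta> = C$$(k,k)*C$$(k+1,k+1) - C$$(k,k+1)*C$$(k+1,k)"
  define A where "A = mat k k (\<lambda>(i,j). C$$(i,j))"
  define X where "X = mat k 2 (\<lambda>(i,j). C$$(i,k+j))"
  define Y where "Y = mat 2 k (\<lambda>(i,j). C$$(k+i,j))"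
  define H where "H = mat 2 2 (\<lambda>(i,j). C$$(k+i,k+j))"
  define Hi where "Hi = mat 2 2 (\<lambda>(i,j). (if i=0 then (if j=0 then C$$(k+1,k+1) else - C$$(k,k+1))
      else (if j=0 then - C$$(k+1,k) else C$$(k,k))) / \<delta>)"
  have cA: "A \<in> carrier_mat k k" and cX: "X \<in> carrier_mat k 2" and cY: "Y \<in> carrier_mat 2 k"
    and cH: "H \<in> carrier_mat 2 2" and cHi: "Hi \<in> carrier_mat 2 2"
    by (auto simp: A_def X_def Y_def H_def Hi_def)
  have CC: "C = four_block_mat A X Y H"
    by (rule eq_matI, insert C, auto simp: A_def X_def Y_def H_def)
  have d0: "\<delta> \<noteq> 0" using dH \<delta>_def by simp
  have HiH: "Hi * H = 1\<^sub>m 2"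
  proof (rule eq_matI)
    fix i j assume "i < dim_row (1\<^sub>m 2 :: 'a mat)" "j < dim_col (1\<^sub>m 2 :: 'a mat)"
    hence "i = 0 \<or> i = 1" "j = 0 \<or> j = 1" by auto
    thus "(Hi * H) $$ (i, j) = 1\<^sub>m 2 $$ (i, j)" using d0
      by (auto simp: Hi_def H_def scalar_prod_def numeral_2_eq_2 diff_divide_distrib[symmetric] add_divide_distrib[symmetric] \<delta>_def algebra_simps)
  qed (auto simp: Hi_def H_def)
  define M where "M = four_block_mat (1\<^sub>m k) (- (X * Hi)) (0\<^sub>m 2 k) (1\<^sub>m 2)"
  have cM: "M \<in> carrier_mat (k+2) (k+2)" unfolding M_def by auto
  have detM: "det M = 1" unfolding M_def
    by (subst det_four_block_mat_lower_left_zero[of _ k _ 2], insert cX cHi, auto)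
  have UR: "1\<^sub>m k * X + - (X * Hi) * H = 0\<^sub>m k 2"
  proof -
    have "- (X * Hi) * H = - X" using cX cHi cH HiH by simp
    thus ?thesis using cX by (auto intro!: eq_matI)
  qed
  define S where "S = 1\<^sub>m k * A + - (X * Hi) * Y"
  have MC: "M * C = four_block_mat S (0\<^sub>m k 2) Y H"
  proof -
    have c1: "- (X * Hi) \<in> carrier_mat k 2" using cX cHi by auto
    show ?thesis unfolding CC M_def S_def
      by (subst mult_four_block_mat[OF one_carrier_mat c1 zero_carrier_mat one_carrier_mat cA cX cY cH],
        insert cA cX cY cH cHi UR, auto)
  qed
  have "det C = det (M * C)" using det_mult[OF cM C] detM by simp
  also have "... = det S * det H" unfolding MC
    by (rule det_four_block_mat_upper_right_zero[of _ k], insert cA cX cY cH cHi, auto simp: S_def)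
  also have "det H = \<delta>" unfolding H_def det2 \<delta>_def by simp
  also have "S = mat k k (\<lambda>(x,y). C$$(x,y) - (C$$(x,k)*(C$$(k+1,k+1)*C$$(k,y) - C$$(k,k+1)*C$$(k+1,y))
       + C$$(x,k+1)*(C$$(k,k)*C$$(k+1,y) - C$$(k+1,k)*C$$(k,y))) / \<delta>)"
    by (rule eq_matI, insert cA cX cY cHi d0, auto simp: S_def A_def X_def Y_def Hi_def scalar_prod_def numeral_2_eq_2 field_simps)
  finally show ?thesis unfolding \<delta>_def by (simp add: mult.commute)
qed

lemma det_reorder:
  fixes A :: "'a::comm_ring_1 mat"
  assumes A: "A \<in> carrier_mat n n" and p: "p permutes {0..<n}"
  shows "det (mat n n (\<lambda>(i,j). A$$(p i, p j))) = det A"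
proof -
  define A1 where "A1 = mat n n (\<lambda>(i,j). A$$(i, p j))"
  have pl: "p i < n" if "i < n" for i using p that by (auto dest: permutes_in_image)
  have A1c: "A1 \<in> carrier_mat n n" by (simp add: A1_def)
  have "mat n n (\<lambda>(i,j). A$$(p i, p j)) = mat n n (\<lambda>(i,j). A1$$(p i, j))"
    by (rule eq_matI, auto simp: A1_def pl)
  hence 1: "det (mat n n (\<lambda>(i,j). A$$(p i, p j))) = signof p * det A1"
    using det_permute_rows[OF A1c p] by simp
  have "transpose_mat A1 = mat n n (\<lambda>(i,j). (transpose_mat A)$$(p i, j))"
    by (rule eq_matI, insert A, auto simp: A1_def pl)
  hence "det (transpose_mat A1) = signof p * det (transpose_mat A)"
    using det_permute_rows[of "transpose_mat A" n p] A p by simp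
  hence 2: "det A1 = signof p * det A" using det_transpose[OF A1c] det_transpose[OF A] by simp
  have "signof p * signof p = (1::'a)"
    by (metis (no_types, lifting) of_int_1 of_int_mult sign_idempotent)
  thus ?thesis using 1 2 by (simp add: mult.assoc[symmetric])
qed


context dyad begin

definition good :: "nat \<Rightarrow> (nat \<Rightarrow> int) \<Rightarrow> (nat \<Rightarrow> nat) \<Rightarrow> 'a mat \<Rightarrow> bool" where
 "good m a \<sigma> C \<longleftrightarrow> C \<in> carrier_mat m m \<and> \<sigma> permutes {..<m} \<and> (\<forall>i. \<sigma> (\<sigma> i) = i) \<and>
   (\<forall>i<m. \<forall>j<m. C$$(i,j) = C$$(j,i)) \<and>
   (\<forall>i<m. vge (C$$(i,i)) (2 * a i)) \<and>
   (\<forall>i<m. \<forall>j<m. i \<noteq> j \<longrightarrow> j \<noteq> \<sigma> i \<longrightarrow> vgt (2*C$$(i,j)) (a i + a j)) \<and>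
   (\<forall>i<m. \<sigma> i \<noteq> i \<longrightarrow> 2*C$$(i,\<sigma> i) \<noteq> 0 \<and> 2*v(2*C$$(i,\<sigma> i)) = a i + a (\<sigma> i)) \<and>
   (\<forall>i<m. \<sigma> i = i \<longrightarrow> C$$(i,i) \<noteq> 0 \<and> v(C$$(i,i)) = a i)"

lemma schur_step:
  assumes g: "good (k+2) a \<sigma> C" and sk: "\<sigma> k = k+1"
  defines "\<delta> \<equiv> C$$(k,k)*C$$(k+1,k+1) - C$$(k,k+1)*C$$(k+1,k)"
   and "S \<equiv> mat k k (\<lambda>(x,y). C$$(x,y) - (C$$(x,k)*(C$$(k+1,k+1)*C$$(k,y) - C$$(k,k+1)*C$$(k+1,y))
       + C$$(x,k+1)*(C$$(k,k)*C$$(k+1,y) - C$$(k+1,k)*C$$(k,y))) / (C$$(k,k)*C$$(k+1,k+1) - C$$(k,k+1)*C$$(k+1,k)))"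
   and "\<sigma>2 \<equiv> \<lambda>x. if x < k then \<sigma> x else x"
  shows "good k a \<sigma>2 S \<and> det C = \<delta> * det S \<and>
     (\<exists>t. ord_ge v t 0 \<and> -4*\<delta> = (2*C$$(k,k+1))*(2*C$$(k,k+1))*(1+4*t)) \<and>
     P0 (k+2) \<sigma> = P0 k \<sigma>2"
proof -
  note gd = g[unfolded good_def]
  have Cc: "C \<in> carrier_mat (k+2) (k+2)" using gd by blast
  have perm: "\<sigma> permutes {..<k+2}" using gd by blast
  have inv: "\<And>i. \<sigma> (\<sigma> i) = i" using gd by blast
  have sym: "\<And>i j. i<k+2 \<Longrightarrow> j<k+2 \<Longrightarrow> C$$(i,j) = C$$(j,i)" using gd by blast
  have dg: "\<And>i. i<k+2 \<Longrightarrow> vge (C$$(i,i)) (2 * a i)" using gd by blast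
  have off: "\<And>i j. i<k+2 \<Longrightarrow> j<k+2 \<Longrightarrow> i \<noteq> j \<Longrightarrow> j \<noteq> \<sigma> i \<Longrightarrow> vgt (2*C$$(i,j)) (a i + a j)"
    using gd by blast
  have pr: "\<And>i. i<k+2 \<Longrightarrow> \<sigma> i \<noteq> i \<Longrightarrow> 2*C$$(i,\<sigma> i) \<noteq> 0 \<and> 2*v(2*C$$(i,\<sigma> i)) = a i + a (\<sigma> i)"
    using gd by blast
  have fx: "\<And>i. i<k+2 \<Longrightarrow> \<sigma> i = i \<Longrightarrow> C$$(i,i) \<noteq> 0 \<and> v(C$$(i,i)) = a i" using gd by blast
  have sk1: "\<sigma> (k+1) = k" using inv[of k] sk by simp
  have slt: "\<sigma> x < k" if "x < k" for x
  proof -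
    have "\<sigma> x < k+2" using perm that permutes_in_image[OF perm, of x] by auto
    moreover have "\<sigma> x \<noteq> k"
    proof
      assume "\<sigma> x = k" hence "x = k+1" using inv[of x] sk by metis
      thus False using that by simp
    qed
    moreover have "\<sigma> x \<noteq> k+1"
    proof
      assume "\<sigma> x = k+1" hence "x = k" using inv[of x] sk1 by metis
      thus False using that by simp
    qed
    ultimately show ?thesis by auto
  qed
  define q where "q = C$$(k,k+1)"
  define p where "p = C$$(k,k)"
  define s where "s = C$$(k+1,k+1)"
  have qs: "C$$(k+1,k) = q" using sym[of "k+1" k] q_def by simp
  have q: "2*q \<noteq> 0" "2*v(2*q) = a k + a (k+1)" using pr[of k] sk q_def by auto
  have p: "vge p (2*a k)" using dg[of k] p_def by simp
  have s: "vge s (2*a (k+1))" using dg[of "k+1"] s_def by simp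
  have dl: "\<delta> = p*s - q*q" unfolding \<delta>_def p_def s_def q_def using qs q_def by simp
  obtain u t where ut: "ord_ge v t 0" "u = 1 + 4*t" "u \<noteq> 0" "v u = 0"
    and d: "p*s - q*q = - ((2*q)*(2*q)/4) * u" using delta_form[OF q p s] by blast
  have d0: "\<delta> \<noteq> 0" using dl d ut q by simp
  have m4: "-4*\<delta> = (2*C$$(k,k+1))*(2*C$$(k,k+1))*(1+4*t)"
    using dl d ut q_def by simp
  have detC: "det C = \<delta> * det S"
    using schur2[OF Cc] d0 unfolding \<delta>_def S_def by simp
  have Sform: "S $$ (x,y) = C$$(x,y) - (C$$(x,k)*(s*C$$(y,k) - q*C$$(y,k+1))
       + C$$(x,k+1)*(p*C$$(y,k+1) - q*C$$(y,k))) / (p*s - q*q)" if "x<k" "y<k" for x y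
    using that sym[of k y] sym[of "k+1" y] qs unfolding S_def dl[symmetric] p_def s_def q_def by simp
  have c1: "S \<in> carrier_mat k k" unfolding S_def by simp
  have c3: "\<forall>i. \<sigma>2 (\<sigma>2 i) = i" using slt inv unfolding \<sigma>2_def by auto
  have c2: "\<sigma>2 permutes {..<k}"
  proof (rule bij_imp_permutes)
    show "bij_betw \<sigma>2 {..<k} {..<k}"
      by (rule bij_betw_byWitness[where f'=\<sigma>2], auto simp: \<sigma>2_def slt inv)
  qed (auto simp: \<sigma>2_def)
  have Ax: "vgt (2*C$$(i,k)) (a i + a k)" if i: "i < k" for i
    using off[of i k] slt[OF i] i by auto
  have Bx: "vgt (2*C$$(i,k+1)) (a i + a (k+1))" if i: "i < k" for i
    using off[of i "k+1"] slt[OF i] i by auto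
  have corrd: "vgt ((C$$(i,k)*(s*C$$(i,k) - q*C$$(i,k+1)) + C$$(i,k+1)*(p*C$$(i,k+1) - q*C$$(i,k))) / (p*s - q*q)) (2 * a i)"
    if i: "i < k" for i
    by (rule corr_diag[OF q p s Ax[OF i] Bx[OF i]])
  have corro: "vgt (2*((C$$(i,k)*(s*C$$(j,k) - q*C$$(j,k+1)) + C$$(i,k+1)*(p*C$$(j,k+1) - q*C$$(j,k))) / (p*s - q*q))) (a i + a j)"
    if i: "i < k" and j: "j < k" for i j
  proof (rule corr_off[OF q p s Ax[OF i] _ Bx[OF i]])
    show "vgt (2 * C $$ (j, k)) (a j + a k)" using Ax[OF j] .
    show "vgt (2 * C $$ (j, k + 1)) (a j + a (k + 1))" using Bx[OF j] .
  qed
  have Sij: "2*S$$(i,j) = 2*C$$(i,j) - 2*((C$$(i,k)*(s*C$$(j,k) - q*C$$(j,k+1)) + C$$(i,k+1)*(p*C$$(j,k+1) - q*C$$(j,k))) / (p*s - q*q))"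
    if i: "i < k" and j: "j < k" for i j
    unfolding Sform[OF i j] by (simp only: right_diff_distrib)
  have c4: "\<forall>i<k. \<forall>j<k. S$$(i,j) = S$$(j,i)"
  proof (intro allI impI)
    fix i j assume i: "i < k" and j: "j < k"
    have e: "C$$(i,j) = C$$(j,i)" using sym[of i j] i j by simp
    have alg: "\<And>Ai Bi Aj Bj::'a. Ai*(s*Aj - q*Bj) + Bi*(p*Bj - q*Aj) = Aj*(s*Ai - q*Bi) + Bj*(p*Bi - q*Ai)"
      by (simp add: algebra_simps)
    show "S$$(i,j) = S$$(j,i)" unfolding Sform[OF i j] Sform[OF j i] e
      by (subst alg, rule refl)
  qed
  have c5: "\<forall>i<k. vge (S$$(i,i)) (2 * a i)"
  proof (intro allI impI)
    fix i assume i: "i < k"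
    show "vge (S$$(i,i)) (2 * a i)"
      unfolding Sform[OF i i] by (rule vge_diff[OF dg vgt_vge[OF corrd[OF i]]]) (use i in simp)
  qed
  have c8: "\<forall>i<k. \<sigma>2 i = i \<longrightarrow> S$$(i,i) \<noteq> 0 \<and> v (S$$(i,i)) = a i"
  proof (intro allI impI)
    fix i assume i: "i < k" and f: "\<sigma>2 i = i"
    hence fi: "\<sigma> i = i" unfolding \<sigma>2_def by simp
    have i2: "i < k+2" using i by simp
    have ci: "C$$(i,i) \<noteq> 0 \<and> v(C$$(i,i)) = a i" using fx[OF i2 fi] .
    have "vgt (- ((C$$(i,k)*(s*C$$(i,k) - q*C$$(i,k+1)) + C$$(i,k+1)*(p*C$$(i,k+1) - q*C$$(i,k))) / (p*s - q*q))) (2 * v (C$$(i,i)))"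
      using vgt_neg[OF corrd[OF i]] ci by simp
    note h = this
    have Seq: "S$$(i,i) = C$$(i,i) + - ((C$$(i,k)*(s*C$$(i,k) - q*C$$(i,k+1)) + C$$(i,k+1)*(p*C$$(i,k+1) - q*C$$(i,k))) / (p*s - q*q))" unfolding Sform[OF i i] by (rule diff_conv_add_uminus)
    have "S$$(i,i) \<noteq> 0 \<and> v (S$$(i,i)) = v (C$$(i,i))" unfolding Seq
      by (rule vgt_exact_sum[OF conjunct1[OF ci] h])
    thus "S$$(i,i) \<noteq> 0 \<and> v (S$$(i,i)) = a i" using ci by simp
  qed
  have c6: "\<forall>i<k. \<forall>j<k. i \<noteq> j \<longrightarrow> j \<noteq> \<sigma>2 i \<longrightarrow> vgt (2*S$$(i,j)) (a i + a j)"
  proof (intro allI impI)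
    fix i j assume i: "i < k" and j: "j < k" and ne: "i \<noteq> j" "j \<noteq> \<sigma>2 i"
    hence "j \<noteq> \<sigma> i" unfolding \<sigma>2_def by simp
    hence "vgt (2*C$$(i,j)) (a i + a j)" using off[of i j] i j ne by simp
    thus "vgt (2*S$$(i,j)) (a i + a j)" unfolding Sij[OF i j] by (rule vgt_diff[OF _ corro[OF i j]])
  qed
  have c7: "\<forall>i<k. \<sigma>2 i \<noteq> i \<longrightarrow> 2*S$$(i,\<sigma>2 i) \<noteq> 0 \<and> 2*v(2*S$$(i,\<sigma>2 i)) = a i + a (\<sigma>2 i)"
  proof (intro allI impI)
    fix i assume i: "i < k" and ne: "\<sigma>2 i \<noteq> i"
    have i2: "i < k+2" using i by simp
    define j where "j = \<sigma> i"
    have j: "j < k" unfolding j_def using slt[OF i] .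
    have s2: "\<sigma>2 i = j" using i unfolding \<sigma>2_def j_def by simp
    have ne': "\<sigma> i \<noteq> i" using ne s2 j_def by simp
    have pij: "2*C$$(i,j) \<noteq> 0 \<and> 2*v(2*C$$(i,j)) = a i + a j" using pr[OF i2 ne'] j_def by simp
    have "vgt (- (2*((C$$(i,k)*(s*C$$(j,k) - q*C$$(j,k+1)) + C$$(i,k+1)*(p*C$$(j,k+1) - q*C$$(j,k))) / (p*s - q*q)))) (2 * v (2*C$$(i,j)))"
      using vgt_neg[OF corro[OF i j]] pij by simp
    note h = this
    have Seq: "2*S$$(i,j) = 2*C$$(i,j) + - (2*((C$$(i,k)*(s*C$$(j,k) - q*C$$(j,k+1)) + C$$(i,k+1)*(p*C$$(j,k+1) - q*C$$(j,k))) / (p*s - q*q)))" unfolding Sij[OF i j] by (rule diff_conv_add_uminus)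
    have "2*S$$(i,j) \<noteq> 0 \<and> v (2*S$$(i,j)) = v (2*C$$(i,j))" unfolding Seq
      by (rule vgt_exact_sum[OF conjunct1[OF pij] h])
    thus "2 * S $$ (i, \<sigma>2 i) \<noteq> 0 \<and> 2 * v (2 * S $$ (i, \<sigma>2 i)) = a i + a (\<sigma>2 i)"
      using s2 pij by simp
  qed
  have goodS: "good k a \<sigma>2 S" unfolding good_def using c1 c2 c3 c4 c5 c6 c7 c8 by blast
  have P0eq: "P0 (k+2) \<sigma> = P0 k \<sigma>2"
    unfolding P0_def \<sigma>2_def using sk sk1 by (auto simp: less_Suc_eq)
  show ?thesis using goodS detC m4 ut P0eq by blast
qed

end


context dyad begin

lemma good_reorder:
  assumes g: "good m a \<sigma> C" and r: "\<rho> permutes {..<m}"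
  shows "good m (a \<circ> \<rho>) (inv_into UNIV \<rho> \<circ> \<sigma> \<circ> \<rho>) (mat m m (\<lambda>(x,y). C$$(\<rho> x, \<rho> y)))"
proof -
  note gd = g[unfolded good_def]
  have perm: "\<sigma> permutes {..<m}" using gd by blast
  have inv: "\<And>i. \<sigma> (\<sigma> i) = i" using gd by blast
  have sym: "\<And>i j. i<m \<Longrightarrow> j<m \<Longrightarrow> C$$(i,j) = C$$(j,i)" using gd by blast
  have dg: "\<And>i. i<m \<Longrightarrow> vge (C$$(i,i)) (2 * a i)" using gd by blast
  have off: "\<And>i j. i<m \<Longrightarrow> j<m \<Longrightarrow> i \<noteq> j \<Longrightarrow> j \<noteq> \<sigma> i \<Longrightarrow> vgt (2*C$$(i,j)) (a i + a j)"
    using gd by blast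
  have pr: "\<And>i. i<m \<Longrightarrow> \<sigma> i \<noteq> i \<Longrightarrow> 2*C$$(i,\<sigma> i) \<noteq> 0 \<and> 2*v(2*C$$(i,\<sigma> i)) = a i + a (\<sigma> i)"
    using gd by blast
  have fx: "\<And>i. i<m \<Longrightarrow> \<sigma> i = i \<Longrightarrow> C$$(i,i) \<noteq> 0 \<and> v(C$$(i,i)) = a i" using gd by blast
  have rl: "\<And>x. x < m \<Longrightarrow> \<rho> x < m" using permutes_in_image[OF r] by auto
  have ri: "\<And>x. \<rho> (inv_into UNIV \<rho> x) = x" "\<And>x. inv_into UNIV \<rho> (\<rho> x) = x" using permutes_inverses[OF r] by auto
  have rinj: "\<And>x y. \<rho> x = \<rho> y \<Longrightarrow> x = y" using ri by metis
  define \<sigma>' where "\<sigma>' = inv_into UNIV \<rho> \<circ> \<sigma> \<circ> \<rho>"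
  have rs: "\<And>x. \<rho> (\<sigma>' x) = \<sigma> (\<rho> x)" unfolding \<sigma>'_def using ri by simp
  have fxeq: "\<And>x. \<sigma>' x = x \<longleftrightarrow> \<sigma> (\<rho> x) = \<rho> x" using rs rinj by metis
  have c2: "\<sigma>' permutes {..<m}" unfolding \<sigma>'_def
    by (rule permutes_compose[OF r permutes_compose[OF perm permutes_inv[OF r]]])
  have c3: "\<forall>i. \<sigma>' (\<sigma>' i) = i" using rs rinj inv by metis
  show ?thesis unfolding \<sigma>'_def[symmetric] good_def
  proof (intro conjI)
    show "mat m m (\<lambda>(x,y). C$$(\<rho> x, \<rho> y)) \<in> carrier_mat m m" by simp
    show "\<sigma>' permutes {..<m}" by fact
    show "\<forall>i. \<sigma>' (\<sigma>' i) = i" by fact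
    show "\<forall>i<m. \<forall>j<m. mat m m (\<lambda>(x,y). C$$(\<rho> x, \<rho> y)) $$ (i, j) = mat m m (\<lambda>(x,y). C$$(\<rho> x, \<rho> y)) $$ (j, i)"
      using sym rl by simp
    show "\<forall>i<m. vge (mat m m (\<lambda>(x,y). C$$(\<rho> x, \<rho> y)) $$ (i, i)) (2 * (a \<circ> \<rho>) i)"
      using dg rl by simp
    show "\<forall>i<m. \<forall>j<m. i \<noteq> j \<longrightarrow> j \<noteq> \<sigma>' i \<longrightarrow> vgt (2 * mat m m (\<lambda>(x,y). C$$(\<rho> x, \<rho> y)) $$ (i, j)) ((a \<circ> \<rho>) i + (a \<circ> \<rho>) j)"
    proof (intro allI impI)
      fix i j assume i: "i < m" and j: "j < m" and ne: "i \<noteq> j" "j \<noteq> \<sigma>' i"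
      have "\<rho> i \<noteq> \<rho> j" using ne rinj by metis
      moreover have "\<rho> j \<noteq> \<sigma> (\<rho> i)" using ne rs rinj by metis
      ultimately show "vgt (2 * mat m m (\<lambda>(x,y). C$$(\<rho> x, \<rho> y)) $$ (i, j)) ((a \<circ> \<rho>) i + (a \<circ> \<rho>) j)"
        using off[OF rl[OF i] rl[OF j]] i j by simp
    qed
    show "\<forall>i<m. \<sigma>' i \<noteq> i \<longrightarrow> 2 * mat m m (\<lambda>(x,y). C$$(\<rho> x, \<rho> y)) $$ (i, \<sigma>' i) \<noteq> 0 \<and>
        2 * v (2 * mat m m (\<lambda>(x,y). C$$(\<rho> x, \<rho> y)) $$ (i, \<sigma>' i)) = (a \<circ> \<rho>) i + (a \<circ> \<rho>) (\<sigma>' i)"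
    proof (intro allI impI)
      fix i assume i: "i < m" and ne: "\<sigma>' i \<noteq> i"
      have si: "\<sigma>' i < m" using c2 i permutes_in_image[OF c2, of i] by auto
      have "\<sigma> (\<rho> i) \<noteq> \<rho> i" using ne fxeq by simp
      thus "2 * mat m m (\<lambda>(x,y). C$$(\<rho> x, \<rho> y)) $$ (i, \<sigma>' i) \<noteq> 0 \<and>
        2 * v (2 * mat m m (\<lambda>(x,y). C$$(\<rho> x, \<rho> y)) $$ (i, \<sigma>' i)) = (a \<circ> \<rho>) i + (a \<circ> \<rho>) (\<sigma>' i)"
        using pr[OF rl[OF i]] i si rs by simp
    qed
    show "\<forall>i<m. \<sigma>' i = i \<longrightarrow> mat m m (\<lambda>(x,y). C$$(\<rho> x, \<rho> y)) $$ (i, i) \<noteq> 0 \<and>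
        v (mat m m (\<lambda>(x,y). C$$(\<rho> x, \<rho> y)) $$ (i, i)) = (a \<circ> \<rho>) i"
      using fx rl fxeq by simp
  qed
qed

lemma P0_reorder:
  assumes r: "\<rho> permutes {..<m}"
  shows "P0 m \<sigma> = \<rho> ` P0 m (inv_into UNIV \<rho> \<circ> \<sigma> \<circ> \<rho>)" and "card (P0 m \<sigma>) = card (P0 m (inv_into UNIV \<rho> \<circ> \<sigma> \<circ> \<rho>))"
proof -
  have rl: "\<And>x. \<rho> x < m \<longleftrightarrow> x < m" using permutes_in_image[OF r] by auto
  have ri: "\<And>x. \<rho> (inv_into UNIV \<rho> x) = x" "\<And>x. inv_into UNIV \<rho> (\<rho> x) = x" using permutes_inverses[OF r] by auto
  have rinj: "inj \<rho>" using ri by (metis injI)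
  show 1: "P0 m \<sigma> = \<rho> ` P0 m (inv_into UNIV \<rho> \<circ> \<sigma> \<circ> \<rho>)"
  proof
    show "P0 m \<sigma> \<subseteq> \<rho> ` P0 m (inv_into UNIV \<rho> \<circ> \<sigma> \<circ> \<rho>)"
    proof
      fix x assume "x \<in> P0 m \<sigma>"
      hence "inv_into UNIV \<rho> x \<in> P0 m (inv_into UNIV \<rho> \<circ> \<sigma> \<circ> \<rho>)" unfolding P0_def using ri rl by (metis (mono_tags, lifting) comp_apply mem_Collect_eq)
      thus "x \<in> \<rho> ` P0 m (inv_into UNIV \<rho> \<circ> \<sigma> \<circ> \<rho>)" using ri by (metis image_eqI)
    qed
    show "\<rho> ` P0 m (inv_into UNIV \<rho> \<circ> \<sigma> \<circ> \<rho>) \<subseteq> P0 m \<sigma>"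
      unfolding P0_def using ri rl by auto (metis ri(1))
  qed
  show "card (P0 m \<sigma>) = card (P0 m (inv_into UNIV \<rho> \<circ> \<sigma> \<circ> \<rho>))"
    unfolding 1 by (rule card_image, rule inj_on_subset[OF rinj], simp)
qed

end


context dyad begin

lemma main_ind:
  "good m a \<sigma> C \<Longrightarrow> even (m + card (P0 m \<sigma>)) \<and>
   (P0 m \<sigma> = {} \<longrightarrow> (\<exists>c t. c \<noteq> 0 \<and> ord_ge v t 0 \<and> (-4)^(m div 2) * det C = c*c*(1+4*t))) \<and>
   (\<forall>i0. P0 m \<sigma> = {i0} \<longrightarrow> (\<exists>c d. c \<noteq> 0 \<and> d \<noteq> 0 \<and> v d = a i0 \<and> det C = c*c*d))"
proof (induction m arbitrary: a \<sigma> C rule: less_induct)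
  case (less m)
  note g = less.prems
  note gd = g[unfolded good_def]
  have Cc: "C \<in> carrier_mat m m" using gd by blast
  have perm: "\<sigma> permutes {..<m}" using gd by blast
  have fx: "\<And>i. i<m \<Longrightarrow> \<sigma> i = i \<Longrightarrow> C$$(i,i) \<noteq> 0 \<and> v(C$$(i,i)) = a i" using gd by blast
  show ?case
  proof (cases "\<exists>i<m. \<sigma> i \<noteq> i")
    case False
    hence P: "P0 m \<sigma> = {..<m}" unfolding P0_def by auto
    have e: "even (m + card (P0 m \<sigma>))" unfolding P by simp
    have z: "(\<exists>c t. c \<noteq> 0 \<and> ord_ge v t 0 \<and> (-4)^(m div 2) * det C = c*c*(1+4*t))" if "P0 m \<sigma> = {}"
    proof -
      have "m = 0" using that P by auto
      hence "det C = 1" using Cc by simp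
      thus ?thesis using \<open>m = 0\<close> by (intro exI[of _ 1] exI[of _ 0], simp)
    qed
    have o: "(\<exists>c d. c \<noteq> 0 \<and> d \<noteq> 0 \<and> v d = a i0 \<and> det C = c*c*d)" if "P0 m \<sigma> = {i0}" for i0
    proof -
      have L: "{..<m} = {i0}" using that P by simp
      have m1: "m = 1" using arg_cong[OF L, of card] by simp
      have i0: "i0 = 0" using L m1 by auto
      have "C = mat 1 1 (\<lambda>(i,j). C$$(i,j))" by (rule eq_matI, insert Cc m1, auto)
      hence "det C = C$$(0,0)" using det1[of "\<lambda>(i,j). C$$(i,j)"] by (metis One_nat_def case_prod_conv)
      moreover have "C$$(0,0) \<noteq> 0 \<and> v(C$$(0,0)) = a 0" using fx[of 0] False m1 by simp
      ultimately show ?thesis using i0 by (intro exI[of _ 1] exI[of _ "C$$(0,0)"], simp)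
    qed
    show ?thesis using e z o by blast
  next
    case True
    then obtain i where i: "i < m" and ni: "\<sigma> i \<noteq> i" by blast
    define j where "j = \<sigma> i"
    have j: "j < m" using permutes_in_image[OF perm, of i] i unfolding j_def by auto
    have ij: "i \<noteq> j" using ni j_def by simp
    define k where "k = m - 2"
    have mk: "m = k + 2" using i j ij unfolding k_def by linarith
    define j1 where "j1 = Transposition.transpose i k j"
    define \<rho> where "\<rho> = Transposition.transpose i k \<circ> Transposition.transpose j1 (k+1)"
    have j1: "j1 < m" "j1 \<noteq> k" using i j ij mk unfolding j1_def transpose_def by auto
    have r: "\<rho> permutes {..<m}" unfolding \<rho>_def
      by (rule permutes_compose; rule permutes_swap_id) (use i j1 mk in auto)
    have rk: "\<rho> k = i" unfolding \<rho>_def using j1 by (simp add: transpose_def)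
    have rk1: "\<rho> (k+1) = j" unfolding \<rho>_def j1_def using ij by (simp add: transpose_def)
    define C' where "C' = mat m m (\<lambda>(x,y). C$$(\<rho> x, \<rho> y))"
    define \<sigma>' where "\<sigma>' = inv_into UNIV \<rho> \<circ> \<sigma> \<circ> \<rho>"
    have g': "good (k+2) (a \<circ> \<rho>) \<sigma>' C'" using good_reorder[OF g r] mk unfolding C'_def \<sigma>'_def by simp
    have dC: "det C' = det C" unfolding C'_def
      using det_reorder[OF Cc, of \<rho>] r by (simp add: atLeast0LessThan)
    have ri: "\<And>x. inv_into UNIV \<rho> (\<rho> x) = x" using permutes_inverses[OF r] by auto
    have sk: "\<sigma>' k = k+1" unfolding \<sigma>'_def using rk rk1 ri[of "k+1"] j_def by simp
    define \<sigma>2 where "\<sigma>2 = (\<lambda>x. if x < k then \<sigma>' x else x)"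
    define \<delta> where "\<delta> = C'$$(k,k)*C'$$(k+1,k+1) - C'$$(k,k+1)*C'$$(k+1,k)"
    define S where "S = mat k k (\<lambda>(x,y). C'$$(x,y) - (C'$$(x,k)*(C'$$(k+1,k+1)*C'$$(k,y) - C'$$(k,k+1)*C'$$(k+1,y))
       + C'$$(x,k+1)*(C'$$(k,k)*C'$$(k+1,y) - C'$$(k+1,k)*C'$$(k,y))) / (C'$$(k,k)*C'$$(k+1,k+1) - C'$$(k,k+1)*C'$$(k+1,k)))"
    have st: "good k (a \<circ> \<rho>) \<sigma>2 S \<and> det C' = \<delta> * det S \<and>
     (\<exists>t. ord_ge v t 0 \<and> -4*\<delta> = (2*C'$$(k,k+1))*(2*C'$$(k,k+1))*(1+4*t)) \<and>
     P0 (k+2) \<sigma>' = P0 k \<sigma>2"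
      using schur_step[OF g' sk] unfolding \<delta>_def S_def \<sigma>2_def by blast
    then obtain t' where gS: "good k (a \<circ> \<rho>) \<sigma>2 S" and dCS: "det C' = \<delta> * det S"
      and t': "ord_ge v t' 0" "-4*\<delta> = (2*C'$$(k,k+1))*(2*C'$$(k,k+1))*(1+4*t')"
      and P0e: "P0 (k+2) \<sigma>' = P0 k \<sigma>2" by blast
    have Q0: "2*C'$$(k,k+1) \<noteq> 0"
    proof -
      have "\<forall>i<k+2. \<sigma>' i \<noteq> i \<longrightarrow> 2*C'$$(i,\<sigma>' i) \<noteq> 0" using g'[unfolded good_def] by blast
      thus ?thesis using sk by (metis add_2_eq_Suc' less_add_Suc1 n_not_Suc_n add.commute Suc_eq_plus1)
    qed
    have IH: "even (k + card (P0 k \<sigma>2)) \<and>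
       (P0 k \<sigma>2 = {} \<longrightarrow> (\<exists>c t. c \<noteq> 0 \<and> ord_ge v t 0 \<and> (-4)^(k div 2) * det S = c*c*(1+4*t))) \<and>
       (\<forall>i0. P0 k \<sigma>2 = {i0} \<longrightarrow> (\<exists>c d. c \<noteq> 0 \<and> d \<noteq> 0 \<and> v d = (a \<circ> \<rho>) i0 \<and> det S = c*c*d))"
      by (rule less.IH[OF _ gS], use mk in simp)
    have P0r: "P0 m \<sigma> = \<rho> ` P0 k \<sigma>2" and cP: "card (P0 m \<sigma>) = card (P0 k \<sigma>2)"
      using P0_reorder[OF r, of \<sigma>] P0e mk unfolding \<sigma>'_def by simp_all
    have e: "even (m + card (P0 m \<sigma>))" using IH cP mk by simp
    have z: "(\<exists>c t. c \<noteq> 0 \<and> ord_ge v t 0 \<and> (-4)^(m div 2) * det C = c*c*(1+4*t))" if "P0 m \<sigma> = {}"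
    proof -
      have "P0 k \<sigma>2 = {}" using that P0r by simp
      then obtain c t where c: "c \<noteq> 0" "ord_ge v t 0" "(-4)^(k div 2) * det S = c*c*(1+4*t)" using IH by blast
      have md: "m div 2 = Suc (k div 2)" using mk by simp
      have "(-4)^(m div 2) * det C = (-4*\<delta>) * ((-4)^(k div 2) * det S)"
        unfolding md dC[symmetric] dCS by (simp add: algebra_simps)
      also have "... = ((2*C'$$(k,k+1))*c) * ((2*C'$$(k,k+1))*c) * (1 + 4*(t + t' + 4*t*t'))"
        unfolding t'(2) c(3) by (simp add: algebra_simps)
      finally have eq: "(-4)^(m div 2) * det C = ((2*C'$$(k,k+1))*c) * ((2*C'$$(k,k+1))*c) * (1 + 4*(t + t' + 4*t*t'))" .
      have "ord_ge v (t + t' + 4*t*t') 0"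
      proof -
        have "ord_ge v 4 0" using two v4 by (simp add: ord_ge_def)
        hence "ord_ge v (4*t*t') 0" using ord_ge_mult[OF ord_ge_mult[OF _ c(2)] t'(1)] by fastforce
        thus ?thesis by (intro ord_ge_add c(2) t'(1))
      qed
      moreover have "(2*C'$$(k,k+1))*c \<noteq> 0" using Q0 c by simp
      ultimately show ?thesis using eq by blast
    qed
    have o: "(\<exists>c d. c \<noteq> 0 \<and> d \<noteq> 0 \<and> v d = a i0 \<and> det C = c*c*d)" if "P0 m \<sigma> = {i0}" for i0
    proof -
      define x0 where "x0 = inv_into UNIV \<rho> i0"
      have "P0 k \<sigma>2 = {x0}"
      proof -
        have "\<rho> ` P0 k \<sigma>2 = {i0}" using that P0r by simp
        hence "inv_into UNIV \<rho> ` \<rho> ` P0 k \<sigma>2 = {x0}" unfolding x0_def by simp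
        moreover have "inv_into UNIV \<rho> ` \<rho> ` P0 k \<sigma>2 = P0 k \<sigma>2" using ri by (simp add: image_image)
        ultimately show ?thesis by simp
      qed
      then obtain c d where c: "c \<noteq> 0" "d \<noteq> 0" "v d = (a \<circ> \<rho>) x0" "det S = c*c*d" using IH by blast
      have ax: "(a \<circ> \<rho>) x0 = a i0" unfolding x0_def using permutes_inverses[OF r] by simp
      obtain u where u: "u = 1 + 4*t'" by simp
      have uu: "u \<noteq> 0" "v u = 0" using unit14[OF t'(1)] u by auto
      have dl: "\<delta> = - (((2*C'$$(k,k+1))*(2*C'$$(k,k+1))) / 4) * u"
      proof -
        have "\<delta> = - (-4*\<delta>) / 4" by simp
        also have "... = - (((2*C'$$(k,k+1))*(2*C'$$(k,k+1))) / 4) * u" unfolding t'(2) u by simp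
        finally show ?thesis .
      qed
      have "det C = ((2*C'$$(k,k+1))*c/2) * ((2*C'$$(k,k+1))*c/2) * (- u * d)"
        unfolding dC[symmetric] dCS dl c(4) by (simp add: field_simps)
      moreover have "(2*C'$$(k,k+1))*c/2 \<noteq> 0" using Q0 c by simp
      moreover have "- u * d \<noteq> 0" using uu c by simp
      moreover have "v (- u * d) = a i0" using uu c ax vmult[of "-u" d] by simp
      ultimately show ?thesis by blast
    qed
    show ?thesis using e z o by blast
  qed
qed

end


context dyad begin

lemma ord_ge_v: "x \<noteq> 0 \<Longrightarrow> ord_ge v x k \<longleftrightarrow> k \<le> v x" by (simp add: ord_ge_def)

lemma hensel:
  assumes comp: "valuation_complete v" and t: "ord_ge v t 0"
    and f0: "ord_ge v f0 0" "ord_ge v (f0*f0 + f0 - t) 1"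
  shows "\<exists>g. g*g + g = t"
proof -
  define P where "P = (\<lambda>x. x*x + x - t)"
  define g where "g = rec_nat f0 (\<lambda>_ x. x - P x / (2*x+1))"
  have g0: "g 0 = f0" and gS: "\<And>n. g (Suc n) = g n - P (g n) / (2 * g n + 1)" unfolding g_def by simp_all
  have unit: "2*x + 1 \<noteq> 0 \<and> v (2*x+1) = 0" if "ord_ge v x 0" for x
  proof -
    have "ord_ge v 2 1" using two by (simp add: ord_ge_def)
    hence "ord_ge v (2*x) (0 + 1)" using ord_ge_mult[OF _ that] by fastforce
    thus ?thesis using strict_sum[of 1 "2*x"] by (simp add: add.commute)
  qed
  have step: "ord_ge v (P (g n) / (2 * g n + 1)) (int n + 1) \<and> ord_ge v (g n) 0 \<and> ord_ge v (P (g n)) (int n + 1)" for n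
  proof (induction n)
    case 0
    have "ord_ge v (P f0 / (2*f0+1)) 1" using unit[OF f0(1)] f0(2) unfolding P_def
      by (cases "f0 * f0 + f0 - t = 0", auto simp: ord_ge_def vdiv)
    thus ?case using g0 f0 P_def by simp
  next
    case (Suc n)
    define x where "x = g n"
    define h where "h = P x / (2*x+1)"
    have x: "ord_ge v x 0" and Px: "ord_ge v (P x) (int n + 1)" and hx: "ord_ge v h (int n + 1)"
      using Suc unfolding x_def h_def by auto
    have u: "2*x + 1 \<noteq> 0" "v (2*x+1) = 0" using unit[OF x] by auto
    have h0: "ord_ge v h 0" using ord_ge_mono[OF hx] by simp
    have gs: "g (Suc n) = x - h" using gS x_def h_def by simp
    have x': "ord_ge v (x - h) 0" using ord_ge_diff[OF x h0] .
    have Pxh: "P (x - h) = h*h"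
    proof -
      have "h * (2*x+1) = P x" unfolding h_def using u by simp
      thus ?thesis unfolding P_def by (simp add: algebra_simps)
    qed
    have P': "ord_ge v (P (x - h)) (int (Suc n) + 1)"
      unfolding Pxh using ord_ge_mult[OF hx hx] by (rule ord_ge_mono) simp
    have u': "2*(x-h) + 1 \<noteq> 0" "v (2*(x-h)+1) = 0" using unit[OF x'] by auto
    have "ord_ge v (P (x - h) / (2*(x-h)+1)) (int (Suc n) + 1)" using P' u'
      by (cases "P (x - h) = 0", auto simp: ord_ge_def vdiv)
    thus ?case using gs x' P' by simp
  qed
  have diff: "ord_ge v (g (Suc n) - g n) (int n + 1)" for n
    using gS[of n] step[of n] ord_ge_neg by fastforce
  have cauchy1: "ord_ge v (g n - g M) (int M + 1)" if "M \<le> n" for M n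
    using that
  proof (induction n rule: dec_induct)
    case base thus ?case by simp
  next
    case (step n)
    have e: "g (Suc n) - g M = (g (Suc n) - g n) + (g n - g M)" by simp
    have d: "ord_ge v (g (Suc n) - g n) (int M + 1)" using diff[of n] ord_ge_mono step by fastforce
    from ord_ge_add[OF d] step show ?case unfolding e by blast
  qed
  have "\<forall>N. \<exists>M. \<forall>m\<ge>M. \<forall>n\<ge>M. ord_ge v (g m - g n) N"
  proof
    fix N :: int
    have "\<forall>m\<ge>nat N. \<forall>n\<ge>nat N. ord_ge v (g m - g n) N"
    proof (intro allI impI)
      fix m n assume "nat N \<le> m" "nat N \<le> n"
      hence "ord_ge v (g m - g (nat N)) N" "ord_ge v (g n - g (nat N)) N"
        using cauchy1 ord_ge_mono by (fastforce, fastforce)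
      hence "ord_ge v ((g m - g (nat N)) - (g n - g (nat N))) N" by (rule ord_ge_diff)
      thus "ord_ge v (g m - g n) N" by simp
    qed
    thus "\<exists>M. \<forall>m\<ge>M. \<forall>n\<ge>M. ord_ge v (g m - g n) N" by blast
  qed
  then obtain L where L: "\<forall>N. \<exists>M. \<forall>n\<ge>M. ord_ge v (g n - L) N"
    using comp unfolding valuation_complete_def by blast
  have L0: "ord_ge v L 0"
  proof -
    obtain M where "\<forall>n\<ge>M. ord_ge v (g n - L) 0" using L by blast
    hence "ord_ge v (g M - L) 0" by simp
    hence "ord_ge v (g M - (g M - L)) 0" using step[of M] ord_ge_diff by blast
    thus ?thesis by simp
  qed
  have PL: "ord_ge v (P L) N" for N
  proof -
    obtain M where M: "\<forall>n\<ge>M. ord_ge v (g n - L) N" using L by blast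
    define n where "n = max M (nat N)"
    have a: "ord_ge v (g n - L) N" using M n_def by simp
    have b: "ord_ge v (P (g n)) N" using step[of n] ord_ge_mono n_def by fastforce
    have c: "ord_ge v (L + g n + 1) 0" using L0 step[of n] ord_ge_add ord_ge_def by (metis add.commute add.right_neutral ord_ge_add order_refl v1)
    have "P L = P (g n) - (g n - L) * (L + g n + 1)" unfolding P_def by (simp add: algebra_simps)
    moreover have "ord_ge v ((g n - L) * (L + g n + 1)) N" using ord_ge_mult[OF a c] by simp
    ultimately show ?thesis using ord_ge_diff[OF b] by simp
  qed
  have "P L = 0"
  proof (rule ccontr)
    assume "P L \<noteq> 0"
    thus False using PL[of "v (P L) + 1"] by (simp add: ord_ge_def)
  qed
  thus ?thesis unfolding P_def by (intro exI[of _ L]) simp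
qed


lemma even_v_sq: "x \<noteq> 0 \<Longrightarrow> v (x*x) = 2 * v x" using vmult[of x x] by simp

lemma not_ram:
  assumes comp: "valuation_complete v" and c: "c \<noteq> 0" and t: "ord_ge v t 0"
  shows "\<not> ramified_quadratic v (c*c*(1+4*t))"
proof
  define D where "D = c*c*(1+4*t)"
  define u where "u = 1+4*t"
  have u: "u \<noteq> 0" "v u = 0" using unit14[OF t] u_def by auto
  assume "ramified_quadratic v (c*c*(1+4*t))"
  then obtain x y where nsq: "\<not> is_square D" and N: "x*x - D*(y*y) \<noteq> 0" and odd: "odd (v (x*x - D*(y*y)))"
    unfolding ramified_quadratic_def D_def by blast
  have H: "\<not> ord_ge v (f*f + f - t) 1" if fo: "ord_ge v f 0" for f
  proof
    assume "ord_ge v (f*f + f - t) 1"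
    then obtain g where g: "g*g + g = t" using hensel[OF comp t fo] by blast
    have "D = (c*(2*g+1))*(c*(2*g+1))" unfolding D_def g[symmetric] by (simp add: algebra_simps)
    thus False using nsq unfolding is_square_def by blast
  qed
  define z where "z = c*y"
  have Nz: "x*x - D*(y*y) = x*x - z*z*u" unfolding D_def z_def u_def by (simp add: algebra_simps)
  have ev: "even (v (x*x - z*z*u))"
  proof (cases "y = 0")
    case True thus ?thesis using N Nz z_def by (auto simp: even_v_sq)
  next
    case y: False
    hence z0: "z \<noteq> 0" using c z_def by simp
    have vzu: "v (z*z*u) = 2 * v z" using vmult[of "z*z" u] u z0 by (simp add: even_v_sq)
    show ?thesis
    proof (cases "x = 0")
      case True thus ?thesis using vzu z0 u by simp
    next
      case x0: False
      consider "v x < v z" | "v z < v x" | "v x = v z" by linarith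
      thus ?thesis
      proof cases
        case 1
        have "ord_ge v (- (z*z*u)) (v (x*x) + 1)" using vzu 1 x0 z0 u by (simp add: ord_ge_def even_v_sq)
        from strict_sum[OF _ this] x0 have "v (x*x - z*z*u) = v (x*x)" by simp
        thus ?thesis using x0 by (simp add: even_v_sq)
      next
        case 2
        have "ord_ge v (x*x) (v (- (z*z*u)) + 1)" using vzu 2 x0 z0 u by (simp add: ord_ge_def even_v_sq)
        from strict_sum[OF _ this] z0 u have "v (- (z*z*u) + x*x) = v (- (z*z*u))" by simp
        thus ?thesis using vzu z0 u by simp
      next
        case 3
        define w where "w = x / z"
        have w0: "w \<noteq> 0" "v w = 0" using 3 x0 z0 unfolding w_def by (auto simp: vdiv)
        define d where "d = w - 1"
        have d0: "ord_ge v d 0" unfolding d_def using w0 by (intro ord_ge_diff) (auto simp: ord_ge_def)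
        have xz: "x*x - z*z*u = (z*z) * (d*d + 2*d - 4*t)"
          unfolding d_def w_def u_def using z0 by (simp add: field_simps)
        have eq: "even (v (d*d + 2*d - 4*t))" and nz: "d*d + 2*d - 4*t \<noteq> 0"
        proof -
          have "even (v (d*d + 2*d - 4*t)) \<and> d*d + 2*d - 4*t \<noteq> 0"
          proof (cases "d \<noteq> 0 \<and> v d < v 2")
            case True
            hence dd: "d \<noteq> 0" "v d + 1 \<le> v 2" by auto
            have a: "ord_ge v (2*d) (v (d*d) + 1)" using dd by (simp add: ord_ge_def vmult even_v_sq)
            have "v 4 \<ge> v (d*d) + 1" using dd v4 two by (simp add: even_v_sq)
            hence b: "ord_ge v (4*t) (v (d*d) + 1)" using ord_ge_mult[OF _ t, of 4 "v 4"]
              by (auto simp: ord_ge_def intro: ord_ge_mono)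
            have "ord_ge v (2*d - 4*t) (v (d*d) + 1)" by (rule ord_ge_diff[OF a b])
            from strict_sum[OF _ this] dd have "d*d + (2*d - 4*t) \<noteq> 0 \<and> v (d*d + (2*d - 4*t)) = v (d*d)" by simp
            thus ?thesis using dd by (simp add: even_v_sq algebra_simps)
          next
            case False
            define f where "f = d / 2"
            have f0: "ord_ge v f 0"
            proof (cases "d = 0")
              case True thus ?thesis unfolding f_def by simp
            next
              case False
              with \<open>\<not> (d \<noteq> 0 \<and> v d < v 2)\<close> have "v d \<ge> v 2" by simp
              thus ?thesis unfolding f_def using False by (simp add: ord_ge_def vdiv)
            qed
            have fo: "ord_ge v (f*f + f - t) 0"
              by (intro ord_ge_diff ord_ge_add t f0) (use ord_ge_mult[OF f0 f0] in simp)
            have nz: "f*f + f - t \<noteq> 0" and vf: "v (f*f + f - t) = 0"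
              using H[OF f0] fo by (auto simp: ord_ge_def)
            have e4: "d*d + 2*d - 4*t = 4 * (f*f + f - t)" unfolding f_def by (simp add: field_simps)
            have "4 * (f*f + f - t) \<noteq> 0" by (metis mult_eq_0_iff nz zero_neq_numeral)
            moreover have "v (4 * (f*f + f - t)) = 2 * v 2" using nz vf v4 vmult[of 4 "f*f + f - t"] by simp
            ultimately show ?thesis unfolding e4 by simp
          qed
          thus "even (v (d*d + 2*d - 4*t))" "d*d + 2*d - 4*t \<noteq> 0" by auto
        qed
        show ?thesis unfolding xz using vmult[of "z*z" "d*d + 2*d - 4*t"] z0 nz eq by (simp add: even_v_sq)
      qed
    qed
  qed
  thus False using odd Nz by simp
qed

end


lemma even_card_inv:
  "finite A \<Longrightarrow> (\<forall>x\<in>A. h x \<in> A \<and> h (h x) = x \<and> h x \<noteq> x) \<Longrightarrow> even (card A)"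
proof (induction "card A" arbitrary: A rule: less_induct)
  case less
  show ?case
  proof (cases "A = {}")
    case True thus ?thesis by simp
  next
    case False
    then obtain a where a: "a \<in> A" by blast
    define A' where "A' = A - {a, h a}"
    have ha: "h a \<in> A" "h a \<noteq> a" using a less.prems by auto
    have sub: "{a, h a} \<subseteq> A" using a ha by simp
    have c2: "card {a, h a} = 2" using ha by simp
    have "card {a, h a} \<le> card A" by (rule card_mono[OF less.prems(1) sub])
    moreover have "card A' = card A - card {a, h a}" unfolding A'_def
      by (rule card_Diff_subset[OF _ sub]) simp
    ultimately have cA: "card A = card A' + 2" using c2 by simp
    have "even (card A')"
    proof (rule less.hyps)
      show "card A' < card A" using cA by simp
      show "finite A'" using less.prems(1) A'_def by simp
      show "\<forall>x\<in>A'. h x \<in> A' \<and> h (h x) = x \<and> h x \<noteq> x"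
        unfolding A'_def using less.prems(2) a by (metis Diff_iff insertCI insertE singletonD)
    qed
    thus ?thesis using cA by simp
  qed
qed

context dval begin

lemma two_ge:
  assumes fin: "finite (residue_field v)" and ev: "even (card (residue_field v))"
  shows "v 2 \<ge> 1"
proof (rule ccontr)
  assume "\<not> v 2 \<ge> 1"
  moreover have "v 2 \<ge> 0" using vadd[of 1 1] by simp
  ultimately have v2: "v 2 = 0" by simp
  define Ob where "Ob = int_ring v"
  define R where "R = {(x, y). x \<in> Ob \<and> y \<in> Ob \<and> ord_ge v (x - y) 1}"
  have Q: "residue_field v = Ob // R" unfolding residue_field_def Ob_def R_def by simp
  have eqv: "equiv Ob R"
  proof (rule equivI)
    show "refl_on Ob R" unfolding refl_on_def R_def by auto
    show "sym R"
    proof (rule symI)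
      fix x y assume "(x,y) \<in> R"
      hence "x \<in> Ob" "y \<in> Ob" "ord_ge v (- (x - y)) 1" unfolding R_def using ord_ge_neg[of "x - y" 1] by auto
      thus "(y,x) \<in> R" unfolding R_def by simp
    qed
    show "trans R"
    proof (rule transI)
      fix x y z assume "(x,y) \<in> R" "(y,z) \<in> R"
      hence "x \<in> Ob" "z \<in> Ob" "ord_ge v ((x - y) + (y - z)) 1" unfolding R_def using ord_ge_add[of "x-y" 1 "y-z"] by auto
      thus "(x,z) \<in> R" unfolding R_def by simp
    qed
    show "R \<subseteq> Ob \<times> Ob" unfolding R_def by auto
  qed
  have O0: "0 \<in> Ob" unfolding Ob_def int_ring_def by simp
  have Oneg: "-x \<in> Ob" if "x \<in> Ob" for x using that ord_ge_neg unfolding Ob_def int_ring_def by blast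
  define X0 where "X0 = R``{0}"
  define h where "h = (\<lambda>X::'a set. uminus ` X)"
  have hcl: "h (R``{x}) = R``{-x}" if x: "x \<in> Ob" for x
  proof
    show "h (R``{x}) \<subseteq> R``{-x}"
    proof
      fix y assume "y \<in> h (R``{x})"
      then obtain z where z: "(x,z) \<in> R" "y = -z" unfolding h_def by auto
      hence "z \<in> Ob" "ord_ge v (- (x - z)) 1" using ord_ge_neg[of "x - z" 1] unfolding R_def by auto
      thus "y \<in> R``{-x}" unfolding R_def using Oneg x z(2) by simp
    qed
    show "R``{-x} \<subseteq> h (R``{x})"
    proof
      fix y assume "y \<in> R``{-x}"
      hence "y \<in> Ob" "ord_ge v (- (-x - y)) 1" using ord_ge_neg[of "-x - y" 1] unfolding R_def by auto
      hence "(x, -y) \<in> R" unfolding R_def using Oneg x by (simp add: add.commute)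
      thus "y \<in> h (R``{x})" unfolding h_def by (metis Image_singleton_iff image_eqI minus_minus)
    qed
  qed
  have X0Q: "X0 \<in> Ob // R" unfolding X0_def using O0 by (rule quotientI)
  have "even (card (Ob // R - {X0}))"
  proof (rule even_card_inv[where h = h])
    show "finite (Ob // R - {X0})" using fin Q by simp
    show "\<forall>X\<in>Ob // R - {X0}. h X \<in> Ob // R - {X0} \<and> h (h X) = X \<and> h X \<noteq> X"
    proof
      fix X assume X: "X \<in> Ob // R - {X0}"
      hence "X \<in> Ob // R" by simp
      then obtain x where x: "x \<in> Ob" "X = R``{x}" by (rule quotientE) blast
      have hX: "h X = R``{-x}" using hcl x by simp
      have hhX: "h (h X) = X" unfolding h_def by (simp add: image_image)
      have ne: "h X \<noteq> X"
      proof
        assume "h X = X"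
        hence "R``{-x} = R``{x}" using hX x by simp
        hence "(-x, x) \<in> R" using eq_equiv_class_iff[OF eqv Oneg[OF x(1)] x(1)] by simp
        hence "ord_ge v (-x - x) 1" unfolding R_def by simp
        hence "ord_ge v (- (-x - x)) 1" by (rule ord_ge_neg)
        moreover have "- (-x - x) = 2*x" by (simp add: field_simps)
        ultimately have o2: "ord_ge v (2*x) 1" by simp
        have "ord_ge v (x - 0) 1"
        proof (cases "x = 0")
          case False thus ?thesis using o2 v2 by (simp add: ord_ge_def vmult)
        qed simp
        hence "(x, 0) \<in> R" unfolding R_def using x O0 by simp
        hence "X = X0" unfolding X0_def x(2) by (rule equiv_class_eq[OF eqv])
        thus False using X by simp
      qed
      have hXO: "h X \<noteq> X0"
      proof
        assume "h X = X0"
        hence "h (h X) = h X0" by simp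
        hence "X = h X0" using hhX by simp
        also have "h X0 = X0" unfolding X0_def using hcl[OF O0] by simp
        finally show False using X by simp
      qed
      have "h X \<in> Ob // R" unfolding hX by (rule quotientI[OF Oneg[OF x(1)]])
      thus "h X \<in> Ob // R - {X0} \<and> h (h X) = X \<and> h X \<noteq> X"
        using hXO hhX ne by blast
    qed
  qed
  moreover have "card (Ob // R) = Suc (card (Ob // R - {X0}))"
    using card_Suc_Diff1[OF _ X0Q] fin Q by simp
  ultimately show False using ev Q by simp
qed

end


theorem proposition1p1:
  fixes ordF :: "'a::field_char_0 \<Rightarrow> int"
    and n :: nat and a \<sigma> :: "nat \<Rightarrow> nat" and B :: "'a mat"
  assumes F: "dyadic_local_field ordF"
    and red: "reduced_form ordF n a \<sigma> B"
    and nondeg: "det B \<noteq> 0"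
  shows "(odd n \<longrightarrow> (\<forall>i0\<in>P0 n \<sigma>. ordF (B $$ (i0, i0)) mod 2 = ordF (det B) mod 2))
       \<and> (even n \<longrightarrow> xi_zero ordF n B \<longrightarrow>
            (\<forall>k::int. \<exists>i0\<in>P0 n \<sigma>. ordF (B $$ (i0, i0)) mod 2 = k mod 2))"
proof -
  have nv: "normalized_discrete_valuation ordF" and comp: "valuation_complete ordF"
    and fin: "finite (residue_field ordF)" and ev: "even (card (residue_field ordF))"
    using F unfolding dyadic_local_field_def by auto
  interpret dval ordF by (unfold_locales, rule nv)
  have two: "ordF 2 \<ge> 1" by (rule two_ge[OF fin ev])
  interpret dyad ordF by (unfold_locales, rule two)
  note rd = red[unfolded reduced_form_def]
  have H: "H_int ordF n B" using rd by blast
  have adm: "admissible n a \<sigma>" using rd by blast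
  note ad = adm[unfolded admissible_def]
  have Bc: "B \<in> carrier_mat n n" and BT: "B\<^sup>T = B" using H unfolding H_int_def by auto
  have sym: "B$$(i,j) = B$$(j,i)" if "i < n" "j < n" for i j
  proof -
    have "B\<^sup>T $$ (i,j) = B$$(j,i)" using Bc that by simp
    thus ?thesis using BT by simp
  qed
  define a' where "a' = (\<lambda>i. int (a i))"
  have g: "good n a' \<sigma> B" unfolding good_def
  proof (intro conjI)
    show "B \<in> carrier_mat n n" by fact
    show "\<sigma> permutes {..<n}" using ad by blast
    show "\<forall>i. \<sigma> (\<sigma> i) = i" using ad by blast
    show "\<forall>i<n. \<forall>j<n. B $$ (i, j) = B $$ (j, i)" using sym by blast
    show "\<forall>i<n. vge (B $$ (i, i)) (2 * a' i)"
      using rd unfolding a'_def vge_def ord_ge_def by auto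
    show "\<forall>i<n. \<forall>j<n. i \<noteq> j \<longrightarrow> j \<noteq> \<sigma> i \<longrightarrow> vgt (2 * B $$ (i, j)) (a' i + a' j)"
      using rd unfolding a'_def vgt_def by auto
    show "\<forall>i<n. \<sigma> i \<noteq> i \<longrightarrow> 2 * B $$ (i, \<sigma> i) \<noteq> 0 \<and> 2 * ordF (2 * B $$ (i, \<sigma> i)) = a' i + a' (\<sigma> i)"
      using rd unfolding a'_def P0_def by auto
    show "\<forall>i<n. \<sigma> i = i \<longrightarrow> B $$ (i, i) \<noteq> 0 \<and> ordF (B $$ (i, i)) = a' i"
      using rd unfolding a'_def P0_def by auto
  qed
  note M = main_ind[OF g]
  have finP: "finite (P0 n \<sigma>)" unfolding P0_def by simp
  have c2: "card (P0 n \<sigma>) \<le> 2" using ad by blast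
  have fixv: "B $$ (i, i) \<noteq> 0 \<and> ordF (B $$ (i, i)) = int (a i)" if "i \<in> P0 n \<sigma>" for i
    using rd that by blast
  have part1: "odd n \<longrightarrow> (\<forall>i0\<in>P0 n \<sigma>. ordF (B $$ (i0, i0)) mod 2 = ordF (det B) mod 2)"
  proof (intro impI ballI)
    fix i0 assume on: "odd n" and i0: "i0 \<in> P0 n \<sigma>"
    have "odd (card (P0 n \<sigma>))" using M on by simp
    moreover have "card (P0 n \<sigma>) \<in> {0,1,2}" using c2 by auto
    ultimately have "card (P0 n \<sigma>) = 1" by auto
    hence "P0 n \<sigma> = {i0}" using i0 by (metis card_1_singletonE singletonD)
    then obtain c d where cd: "c \<noteq> 0" "d \<noteq> 0" "ordF d = a' i0" "det B = c*c*d" using M by blast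
    have "ordF (det B) = 2 * ordF c + ordF d" using cd vmult by simp
    thus "ordF (B $$ (i0, i0)) mod 2 = ordF (det B) mod 2" using fixv[OF i0] cd(3) a'_def by simp
  qed
  have part2: "even n \<longrightarrow> xi_zero ordF n B \<longrightarrow> (\<forall>k::int. \<exists>i0\<in>P0 n \<sigma>. ordF (B $$ (i0, i0)) mod 2 = k mod 2)"
  proof (intro impI allI)
    fix k :: int assume en: "even n" and xi: "xi_zero ordF n B"
    have ec: "even (card (P0 n \<sigma>))" using M en by simp
    show "\<exists>i0\<in>P0 n \<sigma>. ordF (B $$ (i0, i0)) mod 2 = k mod 2"
    proof (cases "card (P0 n \<sigma>) = 0")
      case True
      hence "P0 n \<sigma> = {}" using finP by simp
      then obtain c t where ct: "c \<noteq> 0" "ord_ge ordF t 0" "(-4)^(n div 2) * det B = c*c*(1+4*t)" using M by blast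
      have "D_of n B = c*c*(1+4*t)" unfolding D_of_def using ct(3) .
      hence "\<not> xi_zero ordF n B" unfolding xi_zero_def using not_ram[OF comp ct(1) ct(2)] by simp
      thus ?thesis using xi by simp
    next
      case False
      moreover have "card (P0 n \<sigma>) \<in> {0,1,2}" using c2 by auto
      ultimately have "card (P0 n \<sigma>) = 2" using ec by auto
      then obtain i j where ij: "P0 n \<sigma> = {i, j}" "i \<noteq> j" by (metis card_2_iff)
      have np: "\<not> same_par (a i) (a j)" using ad ij by blast
      have vi: "ordF (B $$ (i, i)) = int (a i)" and vj: "ordF (B $$ (j, j)) = int (a j)" using fixv ij by auto
      have "int (a i) mod 2 = k mod 2 \<or> int (a j) mod 2 = k mod 2"
        using np unfolding same_par_def by presburger
      thus ?thesis using vi vj ij by auto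
    qed
  qed
  show ?thesis using part1 part2 by blast
qed


end
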